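(* Let $\mu>0$, $1\le p<+\infty$ and $f\in L^p([0,1])$. Then for every sufficiently large $n\in\mathbb{N}$, $$\|\mathscr{L}_n^K f-f\|_p\le \frac{\ln(2+\mu)}{\ln(1+\mu)}(K_\mu+1)\,\mathcal{K}(f,\Lambda_n)_p,$$ where $K_\mu:=1+\frac{1}{1+\mu}$, $\Lambda_n:=\frac{\ln(2+\mu)}{\ln(1+\mu)}\left(1+\frac{1}{(1+\mu)\ln(1+\mu)}\right)(K_\mu+1)^{-1}T_n$, $T_n:=\frac{1}{2(n+1)}+\frac{\sqrt2}{\sqrt{n+1}}+\gamma_n$ and $\gamma_n:=\max_{x\in[0,1]}|a_{n+1}(x)-x|$.
   Context: Fix $\mu>0$. Let $\ln_\mu(x):=\ln(1+\mu+x)$ for $x\in[0,1]$, and for $f:[0,1]\to\mathbb{R}$ let $f_\mu(x):=f(x)/\ln_\mu(x)$. Let $p_{n,k}(y):=\binom{n}{k}y^k(1-y)^{n-k}$ and $a_{n+1}(x):=\dfrac{\ln\left(1+\frac{x}{(n+1)(1+\mu)}\right)}{\ln\left(1+\frac{1}{(n+1)(1+\mu)}\right)}$, $x\in[0,1]$. For $n\in\mathbb{N}$ define $\mathscr{L}_n^K f(x):=\ln_\mu(x)\sum_{k=0}^n p_{n,k}(a_{n+1}(x))\,(n+1)\int_{k/(n+1)}^{(k+1)/(n+1)} f_\mu(t)\,dt$, $x\in[0,1]$. The Peetre $K$-functional is $\mathcal{K}(f,t)_p:=\inf_{g\in C^1([0,1])}\{\|f-g\|_p+t\|g\|_{C^1}\}$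 for $t>0$, where $\|g\|_{C^1}:=\|g\|_\infty+\|g'\|_\infty$ and $\|\cdot\|_p$ is the usual $L^p([0,1])$ norm. *)

theory Defs
  imports "HOL-Analysis.Analysis"
begin

definition lnmu :: "real \<Rightarrow> real \<Rightarrow> real" where
  "lnmu \<mu> x = ln (1 + \<mu> + x)"

definition fmu :: "real \<Rightarrow> (real \<Rightarrow> real) \<Rightarrow> real \<Rightarrow> real" where
  "fmu \<mu> f x = f x / lnmu \<mu> x"

definition bern :: "nat \<Rightarrow> nat \<Rightarrow> real \<Rightarrow> real" where
  "bern n k y = real (n choose k) * y ^ k * (1 - y) ^ (n - k)"

text \<open>a_{n+1}(x); the argument m plays the role of n+1\<close>
definition aseq :: "real \<Rightarrow> nat \<Rightarrow> real \<Rightarrow> real" where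
  "aseq \<mu> m x = ln (1 + x / (real m * (1 + \<mu>))) / ln (1 + 1 / (real m * (1 + \<mu>)))"

definition LK :: "real \<Rightarrow> nat \<Rightarrow> (real \<Rightarrow> real) \<Rightarrow> real \<Rightarrow> real" where
  "LK \<mu> n f x = lnmu \<mu> x * (\<Sum>k=0..n. bern n k (aseq \<mu> (n+1) x) *
      (real (n+1) * integral\<^sup>L (lebesgue_on {real k / real (n+1) .. real (k+1) / real (n+1)}) (fmu \<mu> f)))"

definition in_Lp :: "real \<Rightarrow> (real \<Rightarrow> real) \<Rightarrow> bool" where
  "in_Lp p f \<longleftrightarrow> f \<in> borel_measurable (lebesgue_on {0..1}) \<and>
     integrable (lebesgue_on {0..1}) (\<lambda>x. \<bar>f x\<bar> powr p)"

definition Lp_norm :: "real \<Rightarrow> (real \<Rightarrow> real) \<Rightarrow> real" where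
  "Lp_norm p f = (integral\<^sup>L (lebesgue_on {0..1}) (\<lambda>x. \<bar>f x\<bar> powr p)) powr (1 / p)"

definition C1 :: "(real \<Rightarrow> real) set" where
  "C1 = {g. \<exists>g'. continuous_on {0..1} g' \<and>
          (\<forall>x\<in>{0..1}. (g has_real_derivative g' x) (at x within {0..1}))}"

definition C1_norm :: "(real \<Rightarrow> real) \<Rightarrow> real" where
  "C1_norm g = (SUP x\<in>{0..1}. \<bar>g x\<bar>) +
               (SUP x\<in>{0..1}. \<bar>vector_derivative g (at x within {0..1})\<bar>)"

definition Kfun :: "real \<Rightarrow> (real \<Rightarrow> real) \<Rightarrow> real \<Rightarrow> real" where
  "Kfun p f t = (INF g\<in>C1. Lp_norm p (\<lambda>x. f x - g x) + t * C1_norm g)"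

definition gamma :: "real \<Rightarrow> nat \<Rightarrow> real" where
  "gamma \<mu> n = (SUP x\<in>{0..1}. \<bar>aseq \<mu> (n+1) x - x\<bar>)"

definition Tn :: "real \<Rightarrow> nat \<Rightarrow> real" where
  "Tn \<mu> n = 1 / (2 * real (n+1)) + sqrt 2 / sqrt (real (n+1)) + gamma \<mu> n"

definition Kmu :: "real \<Rightarrow> real" where
  "Kmu \<mu> = 1 + 1 / (1 + \<mu>)"

definition Lambda :: "real \<Rightarrow> nat \<Rightarrow> real" where
  "Lambda \<mu> n = ln (2 + \<mu>) / ln (1 + \<mu>) * (1 + 1 / ((1 + \<mu>) * ln (1 + \<mu>)))
                 * inverse (Kmu \<mu> + 1) * Tn \<mu> n"

end

theory Submission
  imports Defs
begin



lemma powr_le_self: "0 \<le> (u::real) \<Longrightarrow> u \<le> 1 \<Longrightarrow> 1 \<le> p \<Longrightarrow> u powr p \<le> u"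
  by (cases "u = 0") (auto intro: powr_le_one_le)

lemma powr_cvx_nonneg:
  fixes x y u :: real
  assumes p: "p \<ge> 1" and x: "x \<ge> 0" and y: "y \<ge> 0" and u: "0 \<le> u" "u \<le> 1"
  shows "((1-u)*x + u*y) powr p \<le> (1-u) * x powr p + u * y powr p"
proof (cases "x = 0 \<or> y = 0 \<or> u = 0 \<or> u = 1")
  case True
  then show ?thesis
  proof (elim disjE)
    assume "x = 0"
    then have "((1-u)*x + u*y) powr p = u powr p * y powr p" using y u by (simp add: powr_mult)
    also have "\<dots> \<le> u * y powr p"
      using u p by (intro mult_right_mono) (auto intro: powr_le_self)
    finally show ?thesis using \<open>x = 0\<close> p by simp
  next
    assume "y = 0"
    then have "((1-u)*x + u*y) powr p = (1-u) powr p * x powr p" using x u by (simp add: powr_mult)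
    also have "\<dots> \<le> (1-u) * x powr p"
      using u p by (intro mult_right_mono) (auto intro: powr_le_self)
    finally show ?thesis using \<open>y = 0\<close> p by simp
  qed auto
next
  case False
  then have "x \<in> {0<..}" "y \<in> {0<..}" "0 < u" "u < 1" using x y u by auto
  from convex_onD[OF powr_convex[OF p], of u x y] this show ?thesis by simp
qed

lemma abs_powr_convex:
  assumes p: "p \<ge> 1"
  shows "convex_on UNIV (\<lambda>t::real. \<bar>t\<bar> powr p)"
proof (rule convex_onI)
  fix t x y :: real assume t: "0 < t" "t < 1"
  have "\<bar>(1 - t) *\<^sub>R x + t *\<^sub>R y\<bar> powr p \<le> ((1-t)*\<bar>x\<bar> + t*\<bar>y\<bar>) powr p"
    using t p by (intro powr_mono2) (auto intro: order.trans[OF abs_triangle_ineq] simp: abs_mult)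
  also have "\<dots> \<le> (1-t) * \<bar>x\<bar> powr p + t * \<bar>y\<bar> powr p"
    using t p by (intro powr_cvx_nonneg) auto
  finally show "\<bar>(1 - t) *\<^sub>R x + t *\<^sub>R y\<bar> powr p \<le> (1 - t) * \<bar>x\<bar> powr p + t * \<bar>y\<bar> powr p" .
qed auto




lemma in_Lp_integrable_cong: "in_Lp p u \<Longrightarrow> integrable (lebesgue_on {0..1}) (\<lambda>x. \<bar>u x\<bar> powr p)"
  by (simp add: in_Lp_def)

lemma Lp_norm_nonneg: "Lp_norm p u \<ge> 0"
  by (simp add: Lp_norm_def)

lemma Lp_norm_pow:
  assumes "p > 0"
  shows "Lp_norm p u powr p = integral\<^sup>L (lebesgue_on {0..1}) (\<lambda>x. \<bar>u x\<bar> powr p)"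
proof -
  have "integral\<^sup>L (lebesgue_on {0..1}) (\<lambda>x. \<bar>u x\<bar> powr p) \<ge> 0"
    by (intro Bochner_Integration.integral_nonneg) auto
  then show ?thesis using assms by (simp add: Lp_norm_def powr_powr)
qed

lemma Lp_norm_le_of_int_le:
  assumes "p > 0" "B \<ge> 0" "integral\<^sup>L (lebesgue_on {0..1}) (\<lambda>x. \<bar>u x\<bar> powr p) \<le> B powr p"
  shows "Lp_norm p u \<le> B"
proof -
  have "Lp_norm p u \<le> (B powr p) powr (1/p)"
    unfolding Lp_norm_def using assms
    by (intro powr_mono2) (auto intro!: Bochner_Integration.integral_nonneg)
  also have "\<dots> = B" using assms by (simp add: powr_powr)
  finally show ?thesis .
qed

lemma Lp_sum_bound:
  assumes p: "p \<ge> 1" and u: "in_Lp p u" and w: "in_Lp p w"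
  shows "in_Lp p (\<lambda>x. u x + w x)"
proof -
  let ?M = "lebesgue_on {0..1::real}"
  have um: "u \<in> borel_measurable ?M" and wm: "w \<in> borel_measurable ?M"
    using u w by (auto simp: in_Lp_def)
  have cv: "convex_on UNIV (\<lambda>t::real. \<bar>t\<bar> powr p)" using abs_powr_convex p by auto
  have pt: "\<bar>u x + w x\<bar> powr p \<le> 2 powr p * (\<bar>u x\<bar> powr p + \<bar>w x\<bar> powr p)" for x
  proof -
    have "\<bar>u x + w x\<bar> powr p = \<bar>(1 - 1/2) *\<^sub>R (2 * u x) + (1/2) *\<^sub>R (2 * w x)\<bar> powr p"
      by simp
    also have "\<dots> \<le> (1 - 1/2) * \<bar>2 * u x\<bar> powr p + (1/2) * \<bar>2 * w x\<bar> powr p"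
      by (rule convex_onD[OF cv]) auto
    also have "\<dots> = 2 powr p * (\<bar>u x\<bar> powr p + \<bar>w x\<bar> powr p) / 2"
      by (simp add: abs_mult powr_mult algebra_simps)
    also have "\<dots> \<le> 2 powr p * (\<bar>u x\<bar> powr p + \<bar>w x\<bar> powr p)"
      by (simp add: powr_ge_zero)
    finally show ?thesis .
  qed
  have "integrable ?M (\<lambda>x. \<bar>u x + w x\<bar> powr p)"
  proof (rule Bochner_Integration.integrable_bound)
    show "integrable ?M (\<lambda>x. 2 powr p * (\<bar>u x\<bar> powr p + \<bar>w x\<bar> powr p))"
      using u w by (auto simp: in_Lp_def)
    show "(\<lambda>x. \<bar>u x + w x\<bar> powr p) \<in> borel_measurable ?M" using um wm by measurable
    show "AE x in ?M. norm (\<bar>u x + w x\<bar> powr p) \<le> norm (2 powr p * (\<bar>u x\<bar> powr p + \<bar>w x\<bar> powr p))"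
      using pt by (auto intro!: AE_I2 order.trans[OF _ abs_ge_self])
  qed
  then show ?thesis using um wm by (auto simp: in_Lp_def)
qed

lemma Minkowski_aux:
  assumes p: "p \<ge> 1" and u: "in_Lp p u" and w: "in_Lp p w"
    and A: "A > 0" "integral\<^sup>L (lebesgue_on {0..1}) (\<lambda>x. \<bar>u x\<bar> powr p) \<le> A powr p"
    and B: "B > 0" "integral\<^sup>L (lebesgue_on {0..1}) (\<lambda>x. \<bar>w x\<bar> powr p) \<le> B powr p"
  shows "Lp_norm p (\<lambda>x. u x + w x) \<le> A + B"
proof -
  let ?M = "lebesgue_on {0..1::real}"
  have cv: "convex_on UNIV (\<lambda>t::real. \<bar>t\<bar> powr p)" using abs_powr_convex p by auto
  define t where "t = B / (A + B)"
  have t: "0 \<le> t" "t \<le> 1" "1 - t = A / (A+B)" using A B by (auto simp: t_def field_simps)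
  have pt: "\<bar>u x + w x\<bar> powr p \<le> (A+B) powr p * ((1-t) / A powr p * \<bar>u x\<bar> powr p + t / B powr p * \<bar>w x\<bar> powr p)" for x
  proof -
    have e: "(u x + w x) / (A+B) = (1 - t) *\<^sub>R (u x / A) + t *\<^sub>R (w x / B)"
    proof -
      have "(1 - t) * (u x / A) = u x / (A+B)" using A B by (simp add: t(3))
      moreover have "t * (w x / B) = w x / (A+B)" using A B by (simp add: t_def)
      ultimately show ?thesis by (simp add: add_divide_distrib)
    qed
    have "\<bar>(u x + w x) / (A+B)\<bar> powr p \<le> (1 - t) * \<bar>u x / A\<bar> powr p + t * \<bar>w x / B\<bar> powr p"
      unfolding e by (rule convex_onD[OF cv]) (use t in auto)
    also have "\<dots> = (1-t) / A powr p * \<bar>u x\<bar> powr p + t / B powr p * \<bar>w x\<bar> powr p"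
      using A B by (simp add: powr_divide)
    finally have "\<bar>u x + w x\<bar> powr p / (A+B) powr p \<le> (1-t) / A powr p * \<bar>u x\<bar> powr p + t / B powr p * \<bar>w x\<bar> powr p"
      using A B by (simp add: powr_divide)
    then show ?thesis using A B by (simp add: field_simps)
  qed
  have iu: "integrable ?M (\<lambda>x. \<bar>u x\<bar> powr p)" and iw: "integrable ?M (\<lambda>x. \<bar>w x\<bar> powr p)"
    using u w by (auto simp: in_Lp_def)
  have "integral\<^sup>L ?M (\<lambda>x. \<bar>u x + w x\<bar> powr p) \<le>
        integral\<^sup>L ?M (\<lambda>x. (A+B) powr p * ((1-t) / A powr p * \<bar>u x\<bar> powr p + t / B powr p * \<bar>w x\<bar> powr p))"
    using pt Lp_sum_bound[OF p u w] iu iw by (intro integral_mono) (auto simp: in_Lp_def)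
  also have "\<dots> = (A+B) powr p * ((1-t) / A powr p * integral\<^sup>L ?M (\<lambda>x. \<bar>u x\<bar> powr p)
                 + t / B powr p * integral\<^sup>L ?M (\<lambda>x. \<bar>w x\<bar> powr p))"
    using iu iw by simp
  also have "\<dots> \<le> (A+B) powr p * ((1-t) / A powr p * A powr p + t / B powr p * B powr p)"
    using A B t by (intro mult_left_mono add_mono mult_left_mono) auto
  also have "\<dots> = (A+B) powr p" using A B by simp
  finally show ?thesis using A B p by (intro Lp_norm_le_of_int_le) auto
qed

lemma Minkowski:
  assumes p: "p \<ge> 1" and u: "in_Lp p u" and w: "in_Lp p w"
  shows "Lp_norm p (\<lambda>x. u x + w x) \<le> Lp_norm p u + Lp_norm p w"
proof (rule field_le_epsilon)
  fix e :: real assume e: "e > 0"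
  have "Lp_norm p (\<lambda>x. u x + w x) \<le> (Lp_norm p u + e/2) + (Lp_norm p w + e/2)"
  proof (rule Minkowski_aux[OF p u w])
    show "Lp_norm p u + e/2 > 0" "Lp_norm p w + e/2 > 0" using e Lp_norm_nonneg[of p u] Lp_norm_nonneg[of p w] by auto
    show "integral\<^sup>L (lebesgue_on {0..1}) (\<lambda>x. \<bar>u x\<bar> powr p) \<le> (Lp_norm p u + e/2) powr p"
      using p e Lp_norm_nonneg[of p u] by (subst Lp_norm_pow[symmetric]) (auto intro!: powr_mono2)
    show "integral\<^sup>L (lebesgue_on {0..1}) (\<lambda>x. \<bar>w x\<bar> powr p) \<le> (Lp_norm p w + e/2) powr p"
      using p e Lp_norm_nonneg[of p w] by (subst Lp_norm_pow[symmetric]) (auto intro!: powr_mono2)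
  qed
  then show "Lp_norm p (\<lambda>x. u x + w x) \<le> Lp_norm p u + Lp_norm p w + e" by simp
qed




lemma bern_eq: "bern n k y = Bernstein n k y"
  by (simp add: bern_def Bernstein_def)

lemma Bernstein_integral:
  assumes "k \<le> n"
  shows "(Bernstein n k has_integral (1 / real (n+1))) {0..1}"
proof -
  have B: "((\<lambda>t. t powr (real k + 1 - 1) * (1 - t) powr (real (n-k) + 1 - 1)) has_integral
           Beta (real k + 1) (real (n-k) + 1)) {0..1}"
    by (rule has_integral_Beta_real) auto
  have "Beta (real k + 1) (real (n-k) + 1) = fact k * fact (n-k) / fact (n+1)"
  proof -
    have "Gamma (real k + 1) = fact k" "Gamma (real (n-k) + 1) = fact (n-k)"
      "Gamma (real k + 1 + (real (n-k) + 1)) = fact (n+1)"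
      using Gamma_fact[of k] Gamma_fact[of "n-k"] Gamma_fact[of "n+1"] assms
      by (simp_all add: add.commute of_nat_diff)
    then show ?thesis by (simp add: Beta_def)
  qed
  have B': "((\<lambda>t. t powr real k * (1 - t) powr real (n-k)) has_integral fact k * fact (n-k) / fact (n+1)) {0..1}"
    using B \<open>Beta _ _ = _\<close> by simp
  have B2: "((\<lambda>t::real. t ^ k * (1 - t) ^ (n-k)) has_integral fact k * fact (n-k) / fact (n+1)) {0..1}"
    using has_integral_spike_finite_eq[of "{0,1}" "{0..1}" "\<lambda>t. t powr real k * (1 - t) powr real (n-k)" "\<lambda>t::real. t ^ k * (1 - t) ^ (n-k)"] B'
    by (auto simp: powr_realpow)
  have "(Bernstein n k has_integral real (n choose k) * (fact k * fact (n-k) / fact (n+1))) {0..1}"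
  proof -
    have "Bernstein n k = (\<lambda>x. real (n choose k) * (x ^ k * (1 - x) ^ (n-k)))"
      by (rule ext) (simp add: Bernstein_def)
    then show ?thesis using has_integral_mult_right[OF B2, of "real (n choose k)"] by simp
  qed
  moreover have "real (n choose k) * (fact k * fact (n-k) / fact (n+1)) = 1 / real (n+1)"
  proof -
    have "(fact n :: real) > 0" by simp
    moreover have "(fact n :: real) * real n \<ge> 0" by simp
    ultimately have "fact n + fact n * real n \<noteq> 0" by linarith
    then show ?thesis using assms by (simp add: binomial_fact field_simps)
  qed
  ultimately show ?thesis by simp
qed




definition cc :: "real \<Rightarrow> nat \<Rightarrow> real" where "cc \<mu> m = 1 / (real m * (1 + \<mu>))"
definition adv :: "real \<Rightarrow> nat \<Rightarrow> real \<Rightarrow> real" where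
  "adv \<mu> m x = cc \<mu> m / ((1 + x * cc \<mu> m) * ln (1 + cc \<mu> m))"

lemma cc_pos: "\<mu> > 0 \<Longrightarrow> m \<ge> 1 \<Longrightarrow> cc \<mu> m > 0"
  by (simp add: cc_def)

lemma cc_le: "\<mu> > 0 \<Longrightarrow> m \<ge> 1 \<Longrightarrow> cc \<mu> m \<le> 1 / (1 + \<mu>)"
  unfolding cc_def by (intro divide_left_mono) (auto simp: mult_le_cancel_right1)

lemma aseq_cc: "aseq \<mu> m x = ln (1 + x * cc \<mu> m) / ln (1 + cc \<mu> m)"
  by (simp add: aseq_def cc_def)

lemma aseq_deriv:
  assumes "\<mu> > 0" "m \<ge> 1" "x \<ge> 0"
  shows "(aseq \<mu> m has_real_derivative adv \<mu> m x) (at x)"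
proof -
  have c: "cc \<mu> m > 0" using cc_pos assms by auto
  have l: "ln (1 + cc \<mu> m) > 0" using c by simp
  have "1 + x * cc \<mu> m > 0" using c assms by (simp add: add_pos_nonneg)
  have "((\<lambda>x. ln (1 + x * cc \<mu> m) / ln (1 + cc \<mu> m)) has_real_derivative (cc \<mu> m / (1 + x * cc \<mu> m)) / ln (1 + cc \<mu> m)) (at x)"
    using c assms l \<open>1 + x * cc \<mu> m > 0\<close>
    by (auto intro!: derivative_eq_intros)
  moreover have "(cc \<mu> m / (1 + x * cc \<mu> m)) / ln (1 + cc \<mu> m) = adv \<mu> m x"
    by (simp add: adv_def)
  ultimately have "((\<lambda>x. ln (1 + x * cc \<mu> m) / ln (1 + cc \<mu> m)) has_real_derivative adv \<mu> m x) (at x)" by simp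
  then show ?thesis by (simp add: aseq_cc[abs_def])
qed

lemma aseq_cont: "\<mu> > 0 \<Longrightarrow> m \<ge> 1 \<Longrightarrow> continuous_on {0..1} (aseq \<mu> m)"
  by (rule DERIV_continuous_on[where D="adv \<mu> m"]) (use aseq_deriv[of \<mu> m] in \<open>auto intro: has_field_derivative_at_within\<close>)

lemma aseq_range:
  assumes "\<mu> > 0" "m \<ge> 1" "0 \<le> x" "x \<le> 1"
  shows "0 \<le> aseq \<mu> m x" "aseq \<mu> m x \<le> 1"
proof -
  have c: "cc \<mu> m > 0" using cc_pos assms by auto
  have "ln (1 + x * cc \<mu> m) \<le> ln (1 + cc \<mu> m)" using c assms
    by (subst ln_le_cancel_iff) (auto simp: add_pos_nonneg mult_left_le_one_le)
  moreover have "0 \<le> ln (1 + x * cc \<mu> m)" using c assms by simp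
  moreover have "0 < ln (1 + cc \<mu> m)" using c by simp
  ultimately show "0 \<le> aseq \<mu> m x" "aseq \<mu> m x \<le> 1" unfolding aseq_cc by auto
qed

lemma aseq_0: "aseq \<mu> m 0 = 0" by (simp add: aseq_def)
lemma aseq_1: "\<mu> > 0 \<Longrightarrow> m \<ge> 1 \<Longrightarrow> aseq \<mu> m 1 = 1"
  using cc_pos[of \<mu> m] by (simp add: aseq_cc)

lemma adv_bound:
  assumes "\<mu> > 0" "m \<ge> 1" "0 \<le> x" "x \<le> 1"
  shows "1 \<le> Kmu \<mu> * adv \<mu> m x"
proof -
  let ?c = "cc \<mu> m"
  have c: "?c > 0" using cc_pos assms by auto
  have L: "0 < ln (1 + ?c)" "ln (1 + ?c) \<le> ?c" using c by (auto intro: ln_add_one_self_le_self)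
  have "1 + x * ?c \<le> Kmu \<mu>" using cc_le[of \<mu> m] assms c
    by (simp add: Kmu_def) (smt (verit) mult_left_le_one_le)
  then have "(1 + x * ?c) * ln (1 + ?c) \<le> Kmu \<mu> * ?c"
    using L c assms by (intro mult_mono) (auto simp: Kmu_def)
  moreover have "(1 + x * ?c) * ln (1 + ?c) > 0" using L c assms by (simp add: add_pos_nonneg)
  ultimately show ?thesis by (simp add: adv_def field_simps)
qed

lemma adv_cont: "\<mu> > 0 \<Longrightarrow> m \<ge> 1 \<Longrightarrow> continuous_on {0..1} (adv \<mu> m)"
proof -
  assume a: "\<mu> > 0" "m \<ge> 1"
  have c: "cc \<mu> m > 0" using cc_pos a by auto
  have "\<forall>x\<in>{0..1}. (1 + x * cc \<mu> m) * ln (1 + cc \<mu> m) \<noteq> 0"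
  proof
    fix x :: real assume "x \<in> {0..1}"
    then have "1 + x * cc \<mu> m > 0" using c by (simp add: add_pos_nonneg)
    then show "(1 + x * cc \<mu> m) * ln (1 + cc \<mu> m) \<noteq> 0" using c by simp
  qed
  then show ?thesis unfolding adv_def by (intro continuous_intros) auto
qed

lemma Bernstein_aseq_integral:
  assumes mu: "\<mu> > 0" and k: "k \<le> n"
  shows "(\<lambda>x. Bernstein n k (aseq \<mu> (n+1) x)) integrable_on {0..1}"
    "integral {0..1} (\<lambda>x. Bernstein n k (aseq \<mu> (n+1) x)) \<le> Kmu \<mu> / real (n+1)"
proof -
  let ?a = "aseq \<mu> (n+1)"
  have cB: "continuous_on {0..1} (Bernstein n k)"
    unfolding Bernstein_def by (intro continuous_intros)
  have ca: "continuous_on {0..1} ?a" using aseq_cont mu by auto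
  have ra: "?a ` {0..1} \<subseteq> {0..1}" using aseq_range[OF mu, of "n+1"] by auto
  have cBa: "continuous_on {0..1} (\<lambda>x. Bernstein n k (?a x))"
    using continuous_on_compose[OF ca continuous_on_subset[OF cB ra]] by (simp add: o_def)
  show int: "(\<lambda>x. Bernstein n k (?a x)) integrable_on {0..1}"
    using cBa integrable_continuous_interval by blast
  have sub: "((\<lambda>x. adv \<mu> (n+1) x *\<^sub>R Bernstein n k (?a x)) has_integral integral {?a 0..?a 1} (Bernstein n k)) {0..1}"
    by (rule has_integral_substitution[where c=0 and d=1])
       (use mu ra cB aseq_range[OF mu, of "n+1"] aseq_deriv[OF mu, of "n+1"] aseq_0[of \<mu> "n+1"] aseq_1[OF mu, of "n+1"] in \<open>auto intro: has_field_derivative_at_within\<close>)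
  have "integral {?a 0..?a 1} (Bernstein n k) = 1 / real (n+1)"
    using Bernstein_integral[OF k] mu aseq_0 aseq_1[OF mu] by (auto dest: integral_unique)
  then have sub2: "((\<lambda>x. Kmu \<mu> * (adv \<mu> (n+1) x * Bernstein n k (?a x))) has_integral Kmu \<mu> * (1 / real (n+1))) {0..1}"
    using has_integral_mult_right[OF sub, of "Kmu \<mu>"] by simp
  have "integral {0..1} (\<lambda>x. Bernstein n k (?a x)) \<le> Kmu \<mu> * (1 / real (n+1))"
  proof (rule has_integral_le[OF integrable_integral[OF int] sub2])
    fix x :: real assume x: "x \<in> {0..1}"
    have "0 \<le> Bernstein n k (?a x)" using aseq_range[OF mu, of "n+1" x] x by (auto intro: Bernstein_nonneg)
    then show "Bernstein n k (?a x) \<le> Kmu \<mu> * (adv \<mu> (n+1) x * Bernstein n k (?a x))"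
    proof -
      have "1 * Bernstein n k (?a x) \<le> (Kmu \<mu> * adv \<mu> (n+1) x) * Bernstein n k (?a x)"
        using adv_bound[OF mu, of "n+1" x] x \<open>0 \<le> Bernstein n k (?a x)\<close> by (intro mult_right_mono) auto
      then show ?thesis by (simp add: mult.assoc)
    qed
  qed
  then show "integral {0..1} (\<lambda>x. Bernstein n k (?a x)) \<le> Kmu \<mu> / real (n+1)" by simp
qed




lemma lint_hk:
  fixes f :: "real \<Rightarrow> real"
  assumes "integrable (lebesgue_on S) f" "S \<in> sets lebesgue"
  shows "integral\<^sup>L (lebesgue_on S) f = integral S f"
  using has_integral_integral_lebesgue_on[OF assms] by (simp add: integral_unique)

lemma lint_abs_int:
  fixes f :: "real \<Rightarrow> real"
  assumes "integrable (lebesgue_on S) f" "S \<in> sets lebesgue"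
  shows "f absolutely_integrable_on S"
  using assms by (simp add: integrable_restrict_space set_integrable_def)

lemma abs_int_lint:
  fixes f :: "real \<Rightarrow> real"
  assumes "f absolutely_integrable_on S" "S \<in> sets lebesgue"
  shows "integrable (lebesgue_on S) f"
  using absolutely_integrable_imp_integrable assms by blast

lemma cont_int_lebesgue:
  fixes f :: "real \<Rightarrow> real"
  shows "continuous_on {a..b} f \<Longrightarrow> integrable (lebesgue_on {a..b}) f"
  by (intro abs_int_lint absolutely_integrable_continuous_real) auto

lemma cont_in_Lp:
  assumes "continuous_on {0..1} u" "p > 0"
  shows "in_Lp p u"
proof -
  have "continuous_on {0..1} (\<lambda>x. \<bar>u x\<bar> powr p)"
    using assms by (intro continuous_on_powr' continuous_intros) auto
  then show ?thesis unfolding in_Lp_def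
    using assms by (auto intro: cont_int_lebesgue continuous_imp_measurable_on_sets_lebesgue)
qed

lemma abs_le_powr: "p \<ge> 1 \<Longrightarrow> \<bar>x::real\<bar> \<le> 1 + \<bar>x\<bar> powr p"
proof (cases "\<bar>x\<bar> \<le> 1")
  case False
  assume p: "p \<ge> 1"
  have "\<bar>x\<bar> = \<bar>x\<bar> powr 1" by simp
  also have "\<dots> \<le> \<bar>x\<bar> powr p" using False p by (intro powr_mono) auto
  finally show ?thesis by simp
qed (auto simp: powr_ge_zero add_increasing2)

lemma in_Lp_integrable:
  assumes p: "p \<ge> 1" and h: "in_Lp p h"
  shows "integrable (lebesgue_on {0..1}) h"
proof (rule Bochner_Integration.integrable_bound)
  show "integrable (lebesgue_on {0..1}) (\<lambda>x. 1 + \<bar>h x\<bar> powr p)"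
  proof (rule Bochner_Integration.integrable_add)
    show "integrable (lebesgue_on {0..1::real}) (\<lambda>x. 1::real)" by (rule cont_int_lebesgue) auto
  qed (use h in \<open>auto simp: in_Lp_def\<close>)
  show "h \<in> borel_measurable (lebesgue_on {0..1})" using h by (simp add: in_Lp_def)
  show "AE x in lebesgue_on {0..1}. norm (h x) \<le> norm (1 + \<bar>h x\<bar> powr p)"
    using abs_le_powr[OF p] by (auto intro!: AE_I2 order.trans[OF _ abs_ge_self])
qed

lemma lnmu_pos: "\<mu> > 0 \<Longrightarrow> x \<ge> 0 \<Longrightarrow> lnmu \<mu> x > 0"
  by (simp add: lnmu_def)

lemma lnmu_ge: "\<mu> > 0 \<Longrightarrow> x \<ge> 0 \<Longrightarrow> ln (1 + \<mu>) \<le> lnmu \<mu> x"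
  by (simp add: lnmu_def)

lemma lnmu_le: "\<mu> > 0 \<Longrightarrow> x \<ge> 0 \<Longrightarrow> x \<le> 1 \<Longrightarrow> lnmu \<mu> x \<le> ln (2 + \<mu>)"
  by (simp add: lnmu_def)

lemma lnmu_cont: "\<mu> > 0 \<Longrightarrow> continuous_on {0..1} (lnmu \<mu>)"
  unfolding lnmu_def[abs_def] by (intro continuous_intros) auto

lemma fmu_in_Lp:
  assumes mu: "\<mu> > 0" and p: "p \<ge> 1" and h: "in_Lp p h"
  shows "in_Lp p (fmu \<mu> h)"
    "\<And>x. x \<in> {0..1} \<Longrightarrow> \<bar>fmu \<mu> h x\<bar> powr p \<le> \<bar>h x\<bar> powr p / ln (1 + \<mu>) powr p"
proof -
  let ?M = "lebesgue_on {0..1::real}"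
  have lm: "lnmu \<mu> \<in> borel_measurable ?M"
    using lnmu_cont[OF mu] by (intro continuous_imp_measurable_on_sets_lebesgue) auto
  have hm: "h \<in> borel_measurable ?M" using h by (simp add: in_Lp_def)
  have fm: "fmu \<mu> h \<in> borel_measurable ?M"
    unfolding fmu_def[abs_def] using lm hm by measurable
  show bd: "\<bar>fmu \<mu> h x\<bar> powr p \<le> \<bar>h x\<bar> powr p / ln (1 + \<mu>) powr p" if x: "x \<in> {0..1}" for x
  proof -
    have l: "lnmu \<mu> x > 0" "ln (1+\<mu>) \<le> lnmu \<mu> x" "ln (1+\<mu>) > 0" using x mu lnmu_pos lnmu_ge by auto
    have "\<bar>fmu \<mu> h x\<bar> powr p = \<bar>h x\<bar> powr p / lnmu \<mu> x powr p"
      using l by (simp add: fmu_def abs_divide powr_divide)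
    also have "\<dots> \<le> \<bar>h x\<bar> powr p / ln (1 + \<mu>) powr p"
      using l p by (intro divide_left_mono powr_mono2 mult_pos_pos) (auto simp: powr_ge_zero)
    finally show ?thesis .
  qed
  have "integrable ?M (\<lambda>x. \<bar>fmu \<mu> h x\<bar> powr p)"
  proof (rule Bochner_Integration.integrable_bound)
    show "integrable ?M (\<lambda>x. \<bar>h x\<bar> powr p / ln (1 + \<mu>) powr p)"
      using h by (auto simp: in_Lp_def)
    show "(\<lambda>x. \<bar>fmu \<mu> h x\<bar> powr p) \<in> borel_measurable ?M" using fm by measurable
    show "AE x in ?M. norm (\<bar>fmu \<mu> h x\<bar> powr p) \<le> norm (\<bar>h x\<bar> powr p / ln (1 + \<mu>) powr p)"
      using bd by (auto intro!: AE_I2 order.trans[OF _ abs_ge_self])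
  qed
  then show "in_Lp p (fmu \<mu> h)" using fm by (simp add: in_Lp_def)
qed




lemma tangent_pos:
  assumes p: "p \<ge> 1" and c: "c > (0::real)"
  shows "\<exists>s. \<forall>t. \<bar>t\<bar> powr p \<ge> \<bar>c\<bar> powr p + s * (t - c)"
proof -
  have d: "((\<lambda>t. \<bar>t\<bar> powr p) has_field_derivative p * c powr (p - 1)) (at c)"
  proof (rule has_field_derivative_transform_within_open[OF has_real_derivative_powr[OF c]])
    show "open {0::real<..}" by simp
  qed (use c in auto)
  have "\<forall>t. \<bar>t\<bar> powr p - \<bar>c\<bar> powr p \<ge> p * c powr (p - 1) * (t - c)"
  proof
    fix t :: real
    show "\<bar>t\<bar> powr p - \<bar>c\<bar> powr p \<ge> p * c powr (p - 1) * (t - c)"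
      by (rule convex_on_imp_above_tangent[OF abs_powr_convex[OF p] connected_UNIV _ _ d]) auto
  qed
  then show ?thesis by (intro exI[of _ "p * c powr (p - 1)"]) (auto simp: algebra_simps)
qed

lemma tangent:
  assumes p: "p \<ge> 1"
  shows "\<exists>s. \<forall>t. \<bar>t\<bar> powr p \<ge> \<bar>c::real\<bar> powr p + s * (t - c)"
proof (cases "c = 0")
  case True then show ?thesis by (intro exI[of _ 0]) (auto simp: powr_ge_zero)
next
  case False
  show ?thesis
  proof (cases "c > 0")
    case True then show ?thesis using tangent_pos[OF p] by blast
  next
    case False
    with \<open>c \<noteq> 0\<close> have "-c > 0" by auto
    from tangent_pos[OF p this] obtain s where s: "\<forall>t. \<bar>t\<bar> powr p \<ge> \<bar>-c\<bar> powr p + s * (t - - c)" by blast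
    show ?thesis
    proof (intro exI[of _ "-s"] allI)
      fix t :: real
      show "\<bar>t\<bar> powr p \<ge> \<bar>c\<bar> powr p + - s * (t - c)" using s[rule_format, of "-t"] by (simp add: algebra_simps)
    qed
  qed
qed

lemma avg_jensen:
  fixes f :: "real \<Rightarrow> real"
  assumes p: "p \<ge> 1" and ab: "a < b" and f: "f integrable_on {a..b}"
    and fp: "(\<lambda>t. \<bar>f t\<bar> powr p) integrable_on {a..b}"
  shows "\<bar>integral {a..b} f / (b - a)\<bar> powr p \<le> integral {a..b} (\<lambda>t. \<bar>f t\<bar> powr p) / (b - a)"
proof -
  define c where "c = integral {a..b} f / (b - a)"
  obtain s where s: "\<And>t. \<bar>t\<bar> powr p \<ge> \<bar>c\<bar> powr p + s * (t - c)" using tangent[OF p, of c] by blast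
  have hi: "((\<lambda>t. \<bar>c\<bar> powr p + s * (f t - c)) has_integral
            ((b - a) * \<bar>c\<bar> powr p + s * (integral {a..b} f - (b - a) * c))) {a..b}"
  proof -
    have "((\<lambda>t. \<bar>c\<bar> powr p) has_integral (b - a) * \<bar>c\<bar> powr p) {a..b}"
      using has_integral_const_real[of "\<bar>c\<bar> powr p" a b] ab by simp
    moreover have "((\<lambda>t. f t - c) has_integral (integral {a..b} f - (b - a) * c)) {a..b}"
      using has_integral_diff[OF integrable_integral[OF f] has_integral_const_real[of c a b]] ab by simp
    ultimately show ?thesis by (intro has_integral_add has_integral_mult_right)
  qed
  have "(b - a) * \<bar>c\<bar> powr p + s * (integral {a..b} f - (b - a) * c) \<le> integral {a..b} (\<lambda>t. \<bar>f t\<bar> powr p)"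
    by (rule has_integral_le[OF hi integrable_integral[OF fp]]) (use s in auto)
  moreover have "integral {a..b} f - (b - a) * c = 0" using ab by (simp add: c_def)
  ultimately have "(b - a) * \<bar>c\<bar> powr p \<le> integral {a..b} (\<lambda>t. \<bar>f t\<bar> powr p)" by simp
  then show ?thesis using ab unfolding c_def[symmetric] by (simp add: pos_le_divide_eq mult.commute)
qed




lemma LK_cont:
  assumes mu: "\<mu> > 0"
  shows "continuous_on {0..1} (LK \<mu> n u)"
proof -
  have ca: "continuous_on {0..1} (aseq \<mu> (n+1))" using aseq_cont mu by auto
  show ?thesis unfolding LK_def[abs_def] bern_def
    by (intro continuous_intros lnmu_cont[OF mu] continuous_on_compose2[OF _ ca, of UNIV]) auto
qed

lemma LK_add:
  assumes "\<And>k. k \<le> n \<Longrightarrow> integrable (lebesgue_on {real k / real (n+1) .. real (k+1) / real (n+1)}) (fmu \<mu> u)"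
    and "\<And>k. k \<le> n \<Longrightarrow> integrable (lebesgue_on {real k / real (n+1) .. real (k+1) / real (n+1)}) (fmu \<mu> w)"
  shows "LK \<mu> n (\<lambda>x. u x + w x) x = LK \<mu> n u x + LK \<mu> n w x"
proof -
  have e: "fmu \<mu> (\<lambda>x. u x + w x) = (\<lambda>t. fmu \<mu> u t + fmu \<mu> w t)"
    by (rule ext) (simp add: fmu_def add_divide_distrib)
  let ?I = "\<lambda>k. {real k / real (n+1) .. real (k+1) / real (n+1)}"
  have i: "\<And>k. k \<in> {0..n} \<Longrightarrow> integral\<^sup>L (lebesgue_on (?I k)) (\<lambda>t. fmu \<mu> u t + fmu \<mu> w t) =
     integral\<^sup>L (lebesgue_on (?I k)) (fmu \<mu> u) + integral\<^sup>L (lebesgue_on (?I k)) (fmu \<mu> w)"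
    by (rule Bochner_Integration.integral_add) (use assms in auto)
  have "LK \<mu> n (\<lambda>x. u x + w x) x = lnmu \<mu> x * (\<Sum>k=0..n. bern n k (aseq \<mu> (n+1) x) *
      (real (n+1) * (integral\<^sup>L (lebesgue_on (?I k)) (fmu \<mu> u) + integral\<^sup>L (lebesgue_on (?I k)) (fmu \<mu> w))))"
    unfolding LK_def e by (rule arg_cong[where f="\<lambda>z. lnmu \<mu> x * z"], rule sum.cong[OF refl]) (simp only: i)
  also have "\<dots> = LK \<mu> n u x + LK \<mu> n w x"
    unfolding LK_def by (simp add: distrib_left sum.distrib)
  finally show ?thesis .
qed

lemma sum_intervals:
  fixes f :: "real \<Rightarrow> real"
  assumes f: "f integrable_on {0..1}"
  shows "(\<Sum>k=0..n. integral {real k / real (n+1) .. real (k+1) / real (n+1)} f) = integral {0..1} f"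
proof -
  have "j \<le> n+1 \<Longrightarrow> (\<Sum>k<j. integral {real k / real (n+1) .. real (k+1) / real (n+1)} f) = integral {0..real j / real (n+1)} f" for j
  proof (induction j)
    case 0 then show ?case by simp
  next
    case (Suc j)
    have le: "real (Suc j) / real (n+1) \<le> 1" using Suc.prems by simp
    have "integral {0..real j / real (n+1)} f + integral {real j / real (n+1) .. real (Suc j) / real (n+1)} f
          = integral {0..real (Suc j) / real (n+1)} f"
    proof (rule Henstock_Kurzweil_Integration.integral_combine)
      show "f integrable_on {0..real (Suc j) / real (n + 1)}"
        by (rule integrable_subinterval_real[OF f]) (use le in auto)
    qed (auto simp: divide_right_mono)
    then show ?case using Suc by simp
  qed
  from this[of "n+1"] show ?thesis by (simp add: atLeast0AtMost lessThan_Suc_atMost)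
qed




lemma abs_int_sub:
  fixes f :: "real \<Rightarrow> real"
  assumes "f absolutely_integrable_on {0..1}" "{a..b} \<subseteq> {0..1}"
  shows "f integrable_on {a..b}"
  using absolutely_integrable_on_subinterval[OF assms] set_lebesgue_integral_eq_integral(1) by blast

lemma LK_Lp:
  assumes mu: "\<mu> > 0" and p: "p \<ge> 1" and h: "in_Lp p h"
  shows "in_Lp p (LK \<mu> n h)" "Lp_norm p (LK \<mu> n h) \<le> ln (2+\<mu>) / ln (1+\<mu>) * Kmu \<mu> * Lp_norm p h"
proof -
  show LKL: "in_Lp p (LK \<mu> n h)" using cont_in_Lp[OF LK_cont[OF mu]] p by auto
  define m where "m = real (n+1)"
  define I where "I k = {real k / m .. real (k+1) / m}" for k
  define hm where "hm = fmu \<mu> h"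
  define L where "L = ln (1+\<mu>)"
  define C where "C = ln (2+\<mu>) / L"
  define K where "K = Kmu \<mu>"
  define J where "J k = integral (I k) (\<lambda>t. \<bar>h t\<bar> powr p)" for k
  define c where "c k = m * integral (I k) hm" for k
  define a where "a = aseq \<mu> (n+1)"
  have m: "m > 0" "m \<ge> 1" by (simp_all add: m_def)
  have L: "L > 0" using mu by (simp add: L_def)
  have C: "C > 0" using L mu by (simp add: C_def)
  have K: "K \<ge> 1" using mu by (simp add: K_def Kmu_def)
  have sub: "I k \<subseteq> {0..1}" if "k \<le> n" for k
    using that m by (auto simp: I_def m_def field_simps)
  have Ileb: "I k \<in> sets lebesgue" for k by (simp add: I_def)
  have hmL: "in_Lp p hm" and hmb: "\<And>x. x\<in>{0..1} \<Longrightarrow> \<bar>hm x\<bar> powr p \<le> \<bar>h x\<bar> powr p / L powr p"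
    using fmu_in_Lp[OF mu p h] by (auto simp: hm_def L_def)
  have hmi: "integrable (lebesgue_on {0..1}) hm" using in_Lp_integrable[OF p hmL] .
  have hma: "hm absolutely_integrable_on {0..1}" using lint_abs_int[OF hmi] by simp
  have hpa: "(\<lambda>t. \<bar>h t\<bar> powr p) absolutely_integrable_on {0..1}"
    using h by (intro lint_abs_int) (auto simp: in_Lp_def)
  have hmpa: "(\<lambda>t. \<bar>hm t\<bar> powr p) absolutely_integrable_on {0..1}"
    using hmL by (intro lint_abs_int) (auto simp: in_Lp_def)
  have lk: "integral\<^sup>L (lebesgue_on (I k)) (fmu \<mu> h) = integral (I k) hm" if "k \<le> n" for k
    unfolding hm_def[symmetric] using integrable_subinterval[OF hmi, of "real k / m" "real (k+1) / m"] sub[OF that]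
    by (intro lint_hk) (auto simp: I_def)
  have Jnn: "J k \<ge> 0" if "k \<le> n" for k
    unfolding J_def using abs_int_sub[OF hpa] sub[OF that] by (intro integral_nonneg) (auto simp: I_def powr_ge_zero)
  have jen: "\<bar>c k\<bar> powr p \<le> m * J k / L powr p" if k: "k \<le> n" for k
  proof -
    have ab: "real k / m < real (k+1) / m" using m by (simp add: divide_strict_right_mono)
    have d: "real (k+1) / m - real k / m = 1 / m" using m by (simp add: field_simps)
    have "\<bar>integral (I k) hm / (1/m)\<bar> powr p \<le> integral (I k) (\<lambda>t. \<bar>hm t\<bar> powr p) / (1/m)"
      using avg_jensen[OF p ab, of hm] abs_int_sub[OF hma] abs_int_sub[OF hmpa] sub[OF k] d m
      by (auto simp: I_def abs_mult)
    also have "integral (I k) (\<lambda>t. \<bar>hm t\<bar> powr p) \<le> integral (I k) (\<lambda>t. \<bar>h t\<bar> powr p / L powr p)"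
      using abs_int_sub[OF hmpa] integrable_on_divide[OF abs_int_sub[OF hpa]] sub[OF k] hmb
      by (intro integral_le) (auto simp: I_def subset_iff)
    then have "integral (I k) (\<lambda>t. \<bar>hm t\<bar> powr p) / (1/m) \<le> integral (I k) (\<lambda>t. \<bar>h t\<bar> powr p / L powr p) / (1/m)"
      using m by (intro divide_right_mono) auto
    finally show ?thesis using m by (simp add: c_def J_def mult.commute)
  qed
  have pt: "\<bar>LK \<mu> n h x\<bar> powr p \<le> C powr p * (\<Sum>k=0..n. Bernstein n k (a x) * (m * J k))" if x: "x \<in> {0..1}" for x
  proof -
    have ax: "0 \<le> a x" "a x \<le> 1" using aseq_range[OF mu, of "n+1" x] x by (auto simp: a_def)
    have lx: "lnmu \<mu> x > 0" "lnmu \<mu> x \<le> ln (2+\<mu>)" using x mu lnmu_pos lnmu_le by auto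
    have e: "LK \<mu> n h x = lnmu \<mu> x * (\<Sum>k=0..n. Bernstein n k (a x) *\<^sub>R c k)"
    proof -
      have "bern n k (aseq \<mu> (n+1) x) * (real (n+1) * integral\<^sup>L (lebesgue_on {real k / real (n+1) .. real (k+1) / real (n+1)}) (fmu \<mu> h))
            = Bernstein n k (a x) *\<^sub>R c k" if k: "k \<in> {0..n}" for k
      proof -
        have "integral\<^sup>L (lebesgue_on {real k / real (n+1) .. real (k+1) / real (n+1)}) (fmu \<mu> h) = integral (I k) hm"
          using lk[of k] k unfolding I_def m_def by simp
        then show ?thesis by (simp only: bern_eq a_def c_def m_def real_scaleR_def)
      qed
      then show ?thesis unfolding LK_def by (intro arg_cong[where f="\<lambda>z. lnmu \<mu> x * z"] sum.cong) auto
    qed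
    have "\<bar>LK \<mu> n h x\<bar> powr p = lnmu \<mu> x powr p * \<bar>\<Sum>k=0..n. Bernstein n k (a x) *\<^sub>R c k\<bar> powr p"
      unfolding e using lx by (simp add: abs_mult powr_mult)
    also have "\<dots> \<le> ln (2+\<mu>) powr p * (\<Sum>k=0..n. Bernstein n k (a x) * \<bar>c k\<bar> powr p)"
    proof (rule mult_mono)
      show "lnmu \<mu> x powr p \<le> ln (2+\<mu>) powr p" using lx p by (intro powr_mono2) auto
      show "\<bar>\<Sum>k=0..n. Bernstein n k (a x) *\<^sub>R c k\<bar> powr p \<le> (\<Sum>k=0..n. Bernstein n k (a x) * \<bar>c k\<bar> powr p)"
        by (rule convex_on_sum[OF _ _ abs_powr_convex[OF p]])
           (use ax in \<open>auto simp: atLeast0AtMost intro: Bernstein_nonneg\<close>)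
    qed (auto simp: powr_ge_zero)
    also have "\<dots> \<le> ln (2+\<mu>) powr p * (\<Sum>k=0..n. Bernstein n k (a x) * (m * J k / L powr p))"
      using jen ax by (intro mult_left_mono sum_mono mult_left_mono) (auto intro: Bernstein_nonneg simp: powr_ge_zero)
    also have "\<dots> = C powr p * (\<Sum>k=0..n. Bernstein n k (a x) * (m * J k))"
      using L mu by (simp add: C_def powr_divide sum_distrib_left sum_divide_distrib[symmetric] field_simps)
    finally show ?thesis .
  qed
  have Bi: "((\<lambda>x. Bernstein n k (a x)) has_integral integral {0..1} (\<lambda>x. Bernstein n k (a x))) {0..1}"
    if "k \<le> n" for k using integrable_integral[OF Bernstein_aseq_integral(1)[OF mu that]] unfolding a_def .
  have Fi: "((\<lambda>x. C powr p * (\<Sum>k=0..n. Bernstein n k (a x) * (m * J k))) has_integral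
      C powr p * (\<Sum>k=0..n. integral {0..1} (\<lambda>x. Bernstein n k (a x)) * (m * J k))) {0..1}"
    by (intro has_integral_mult_right has_integral_sum has_integral_mult_left Bi) auto
  have LKi: "(\<lambda>x. \<bar>LK \<mu> n h x\<bar> powr p) integrable_on {0..1}"
    using LKL by (intro set_lebesgue_integral_eq_integral(1) lint_abs_int) (auto simp: in_Lp_def)
  have "Lp_norm p (LK \<mu> n h) powr p = integral {0..1} (\<lambda>x. \<bar>LK \<mu> n h x\<bar> powr p)"
    using LKL p by (subst Lp_norm_pow) (auto intro: lint_hk simp: in_Lp_def)
  also have "\<dots> \<le> C powr p * (\<Sum>k=0..n. integral {0..1} (\<lambda>x. Bernstein n k (a x)) * (m * J k))"
    by (rule has_integral_le[OF integrable_integral[OF LKi] Fi]) (use pt in auto)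
  also have "\<dots> \<le> C powr p * (\<Sum>k=0..n. (K / m) * (m * J k))"
    using Bernstein_aseq_integral(2)[OF mu] Jnn m
    by (intro mult_left_mono sum_mono mult_right_mono) (auto simp: a_def K_def m_def powr_ge_zero)
  also have "\<dots> = C powr p * K * (\<Sum>k=0..n. J k)"
    using m by (simp add: sum_distrib_left mult.assoc)
  also have "(\<Sum>k=0..n. J k) = integral {0..1} (\<lambda>t. \<bar>h t\<bar> powr p)"
    unfolding J_def I_def m_def
    by (rule sum_intervals) (use hpa set_lebesgue_integral_eq_integral(1) in blast)
  also have "\<dots> = Lp_norm p h powr p"
    using h p by (subst Lp_norm_pow) (auto intro: lint_hk[symmetric] simp: in_Lp_def)
  also have "C powr p * K * Lp_norm p h powr p \<le> C powr p * K powr p * Lp_norm p h powr p"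
  proof -
    have "K \<le> K powr p" using K p powr_mono[of 1 p K] by simp
    then show ?thesis using C by (intro mult_right_mono mult_left_mono) (auto simp: powr_ge_zero)
  qed
  also have "\<dots> = (C * K * Lp_norm p h) powr p"
    using C K Lp_norm_nonneg[of p h] by (simp add: powr_mult)
  finally have "Lp_norm p (LK \<mu> n h) powr p \<le> (C * K * Lp_norm p h) powr p" .
  then have "Lp_norm p (LK \<mu> n h) \<le> C * K * Lp_norm p h"
  proof (rule contrapos_pp)
    assume "\<not> Lp_norm p (LK \<mu> n h) \<le> C * K * Lp_norm p h"
    then have "(C * K * Lp_norm p h) powr p < Lp_norm p (LK \<mu> n h) powr p"
      using p C K Lp_norm_nonneg[of p h] by (intro powr_less_mono2) auto
    then show "\<not> Lp_norm p (LK \<mu> n h) powr p \<le> (C * K * Lp_norm p h) powr p" by simp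
  qed
  then show "Lp_norm p (LK \<mu> n h) \<le> ln (2+\<mu>) / ln (1+\<mu>) * Kmu \<mu> * Lp_norm p h"
    by (simp add: C_def L_def K_def)
qed




lemma C1_facts:
  assumes g: "g \<in> C1"
  obtains g' where "continuous_on {0..1} g'" "\<And>x. x \<in> {0..1} \<Longrightarrow> (g has_real_derivative g' x) (at x within {0..1})"
    "continuous_on {0..1} g"
    "\<And>x. x \<in> {0..1} \<Longrightarrow> \<bar>g x\<bar> \<le> (SUP x\<in>{0..1}. \<bar>g x\<bar>)"
    "\<And>x. x \<in> {0..1} \<Longrightarrow> \<bar>g' x\<bar> \<le> (SUP x\<in>{0..1}. \<bar>vector_derivative g (at x within {0..1})\<bar>)"
    "C1_norm g = (SUP x\<in>{0..1}. \<bar>g x\<bar>) + (SUP x\<in>{0..1}. \<bar>vector_derivative g (at x within {0..1})\<bar>)"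
proof -
  from g obtain g' where g': "continuous_on {0..1} g'" "\<And>x. x \<in> {0..1} \<Longrightarrow> (g has_real_derivative g' x) (at x within {0..1})"
    unfolding C1_def by blast
  have cg: "continuous_on {0..1} g" using g'(2) by (rule DERIV_continuous_on)
  have vd: "vector_derivative g (at x within {0..1}) = g' x" if "x \<in> {0..1}" for x
    using g'(2)[OF that] that by (intro vector_derivative_within_closed_interval) (auto simp: has_real_derivative_iff_has_vector_derivative)
  have "compact ((\<lambda>x. \<bar>g x\<bar>) ` {0..1})"
    by (intro compact_continuous_image continuous_intros cg) auto
  then have b1: "bdd_above ((\<lambda>x. \<bar>g x\<bar>) ` {0..1})"
    by (intro bounded_imp_bdd_above compact_imp_bounded)
  have "compact ((\<lambda>x. \<bar>g' x\<bar>) ` {0..1})"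
    by (intro compact_continuous_image continuous_intros g') auto
  then have b2: "bdd_above ((\<lambda>x. \<bar>g' x\<bar>) ` {0..1})"
    by (intro bounded_imp_bdd_above compact_imp_bounded)
  have e: "(SUP x\<in>{0..1}. \<bar>vector_derivative g (at x within {0..1})\<bar>) = (SUP x\<in>{0..1}. \<bar>g' x\<bar>)"
    using vd by (intro SUP_cong) auto
  show ?thesis
  proof (rule that[OF g' cg])
    show "\<bar>g x\<bar> \<le> (SUP x\<in>{0..1}. \<bar>g x\<bar>)" if "x \<in> {0..1}" for x using b1 that by (intro cSUP_upper)
    show "\<bar>g' x\<bar> \<le> (SUP x\<in>{0..1}. \<bar>vector_derivative g (at x within {0..1})\<bar>)" if "x \<in> {0..1}" for x
      unfolding e using b2 that by (intro cSUP_upper)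
  qed (auto simp: C1_norm_def)
qed

lemma fmu_lipschitz:
  assumes mu: "\<mu> > 0" and g': "\<And>x. x \<in> {0..1} \<Longrightarrow> (g has_real_derivative g' x) (at x within {0..1})"
    and b0: "\<And>x. x \<in> {0..1} \<Longrightarrow> \<bar>g x\<bar> \<le> G0" and b1: "\<And>x. x \<in> {0..1} \<Longrightarrow> \<bar>g' x\<bar> \<le> G1"
    and x: "x \<in> {0..1}" and t: "t \<in> {0..1}"
  shows "\<bar>fmu \<mu> g t - fmu \<mu> g x\<bar> \<le> (G1 + G0 / ((1+\<mu>) * ln (1+\<mu>))) / ln (1+\<mu>) * \<bar>t - x\<bar>"
proof -
  define L where "L = ln (1+\<mu>)"
  have L: "L > 0" using mu by (simp add: L_def)
  define D where "D y = (g' y * lnmu \<mu> y - g y * (1 / (1 + \<mu> + y))) / (lnmu \<mu> y * lnmu \<mu> y)" for y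
  have d: "(fmu \<mu> g has_real_derivative D y) (at y within {0..1})" if y: "y \<in> {0..1}" for y
  proof -
    have "lnmu \<mu> y > 0" using y mu lnmu_pos by auto
    moreover have "1 + \<mu> + y > 0" using y mu by auto
    ultimately show ?thesis unfolding fmu_def[abs_def] lnmu_def[abs_def] D_def
      using y g'[OF y] by (auto intro!: derivative_eq_intros simp: lnmu_def power2_eq_square)
  qed
  have db: "norm (D y) \<le> (G1 + G0 / ((1+\<mu>) * L)) / L" if y: "y \<in> {0..1}" for y
  proof -
    have l: "lnmu \<mu> y \<ge> L" "lnmu \<mu> y > 0" using y mu lnmu_pos lnmu_ge by (auto simp: L_def)
    have q: "1 + \<mu> + y \<ge> 1 + \<mu>" using y by auto
    have G: "G0 \<ge> 0" "G1 \<ge> 0" using b0[of 0] b1[of 0] by auto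
    have "1 + \<mu> + y \<noteq> 0" using q mu by auto
    then have Dy: "D y = g' y / lnmu \<mu> y - g y / ((1 + \<mu> + y) * (lnmu \<mu> y * lnmu \<mu> y))"
      using l y mu by (simp add: D_def diff_divide_distrib)
    have e1: "\<bar>g' y / lnmu \<mu> y\<bar> = \<bar>g' y\<bar> / lnmu \<mu> y" using l by (simp add: abs_divide)
    have e2: "\<bar>g y / ((1 + \<mu> + y) * (lnmu \<mu> y * lnmu \<mu> y))\<bar> = \<bar>g y\<bar> / ((1 + \<mu> + y) * (lnmu \<mu> y * lnmu \<mu> y))"
      using l q mu by (simp add: abs_divide abs_mult)
    have "\<bar>D y\<bar> \<le> \<bar>g' y\<bar> / lnmu \<mu> y + \<bar>g y\<bar> / ((1 + \<mu> + y) * (lnmu \<mu> y * lnmu \<mu> y))"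
      by (subst Dy, subst e1[symmetric], subst e2[symmetric], rule abs_triangle_ineq4)
    also have "\<dots> \<le> G1 / L + G0 / ((1 + \<mu>) * (L * L))"
    proof (rule add_mono)
      show "\<bar>g' y\<bar> / lnmu \<mu> y \<le> G1 / L"
        using l L b1[OF y] G by (intro frac_le) auto
      show "\<bar>g y\<bar> / ((1 + \<mu> + y) * (lnmu \<mu> y * lnmu \<mu> y)) \<le> G0 / ((1 + \<mu>) * (L * L))"
        using l L b0[OF y] G q mu by (intro frac_le mult_mono) auto
    qed
    also have "\<dots> = (G1 + G0 / ((1+\<mu>) * L)) / L" by (simp add: add_divide_distrib divide_divide_eq_left mult.assoc)
    finally show ?thesis by simp
  qed
  have "norm (fmu \<mu> g t - fmu \<mu> g x) \<le> (G1 + G0 / ((1+\<mu>) * L)) / L * norm (t - x)"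
    by (rule field_differentiable_bound[OF convex_real_interval(5) d db t x])
  then show ?thesis by (simp add: L_def)
qed




lemma bern_var:
  assumes a: "0 \<le> a" "a \<le> 1"
  shows "(\<Sum>k=0..n. Bernstein n k a * (real k / real (n+1) - a)\<^sup>2) \<le> 1 / real (n+1)"
proof -
  define m where "m = real (n+1)"
  define N where "N = real n"
  have m: "m = N + 1" "m > 0" by (simp_all add: m_def N_def)
  have pt: "(real k / m - a)\<^sup>2 = real k * (real k - 1) * (1 / m\<^sup>2) + real k * (1 / m\<^sup>2 - 2 * a / m) + a\<^sup>2" for k
    using m(2) by (simp add: field_simps power2_eq_square)
  have numeq: "N * (N - 1) * a\<^sup>2 + N * a - 2 * N * a\<^sup>2 * m + a\<^sup>2 * m\<^sup>2 = N * (a - a\<^sup>2) + a\<^sup>2"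
    unfolding m(1) by (simp add: algebra_simps power2_eq_square)
  have "(\<Sum>k=0..n. Bernstein n k a * (real k / m - a)\<^sup>2) =
        (\<Sum>k\<le>n. real k * (real k - 1) * Bernstein n k a) * (1 / m\<^sup>2)
        + (\<Sum>k\<le>n. real k * Bernstein n k a) * (1 / m\<^sup>2 - 2 * a / m) + a\<^sup>2 * (\<Sum>k\<le>n. Bernstein n k a)"
  proof -
    have t: "Bernstein n k a * (real k / m - a)\<^sup>2 = real k * (real k - 1) * Bernstein n k a * (1 / m\<^sup>2)
       + real k * Bernstein n k a * (1 / m\<^sup>2 - 2 * a / m) + a\<^sup>2 * Bernstein n k a" for k
      unfolding pt by (simp add: algebra_simps)
    show ?thesis unfolding t atLeast0AtMost sum.distrib sum_distrib_left sum_distrib_right[symmetric] ..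
  qed
  also have "\<dots> = N * (N - 1) * a\<^sup>2 * (1 / m\<^sup>2) + N * a * (1 / m\<^sup>2 - 2 * a / m) + a\<^sup>2"
    by (simp add: N_def)
  also have "\<dots> = (N * (N - 1) * a\<^sup>2 + N * a - 2 * N * a\<^sup>2 * m + a\<^sup>2 * m\<^sup>2) / m\<^sup>2"
    using m(2) by (simp add: field_simps power2_eq_square)
  also have "\<dots> = (N * (a - a\<^sup>2) + a\<^sup>2) / m\<^sup>2" by (simp only: numeq)
  also have "\<dots> \<le> m / m\<^sup>2"
  proof (rule divide_right_mono)
    have "a\<^sup>2 \<le> 1" using a by (auto simp: power2_eq_square intro: mult_le_one)
    moreover have "a\<^sup>2 \<ge> 0" by simp
    ultimately have "a - a\<^sup>2 \<le> 1" using a by linarith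
    then have "N * (a - a\<^sup>2) \<le> N * 1" using m by (intro mult_left_mono) (auto simp: N_def)
    then show "N * (a - a\<^sup>2) + a\<^sup>2 \<le> m" using m \<open>a\<^sup>2 \<le> 1\<close> by simp
  qed simp
  also have "\<dots> = 1 / m" using m by (simp add: power2_eq_square)
  finally show ?thesis by (simp add: m_def)
qed

lemma bern_absdev:
  assumes a: "0 \<le> a" "a \<le> 1"
  shows "(\<Sum>k=0..n. Bernstein n k a * \<bar>real k / real (n+1) - a\<bar>) \<le> 1 / sqrt (real (n+1))"
proof -
  have "(\<Sum>k=0..n. Bernstein n k a *\<^sub>R \<bar>real k / real (n+1) - a\<bar>)\<^sup>2 \<le>
        (\<Sum>k=0..n. Bernstein n k a * (\<bar>real k / real (n+1) - a\<bar>)\<^sup>2)"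
    by (rule convex_on_sum[OF _ _ convex_power2])
       (use a in \<open>auto simp: atLeast0AtMost intro: Bernstein_nonneg\<close>)
  also have "\<dots> \<le> 1 / real (n+1)" using bern_var[OF a, of n] by simp
  finally have "(\<Sum>k=0..n. Bernstein n k a * \<bar>real k / real (n+1) - a\<bar>) \<le> sqrt (1 / real (n+1))"
    by (intro real_le_rsqrt) simp
  then show ?thesis by (simp add: real_sqrt_divide)
qed

lemma numeric_T:
  assumes n: "n \<ge> 1"
  shows "1 / real (n+1) + 1 / sqrt (real (n+1)) \<le> 1 / (2 * real (n+1)) + sqrt 2 / sqrt (real (n+1))"
proof -
  define s where "s = sqrt (real (n+1))"
  have s2: "s * s = real (n+1)" by (simp add: s_def)
  have r2: "sqrt 2 \<ge> 1.4" by (rule real_le_rsqrt) (simp add: power2_eq_square)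
  have "real (n+1) \<ge> 2" using n by simp
  then have "sqrt (real (n+1)) \<ge> sqrt 2" by (rule real_sqrt_le_mono)
  then have s: "s \<ge> 1.4" using r2 unfolding s_def by linarith
  have "1 / (2 * s) \<le> 1 / (2 * 1.4)" using s by (intro divide_left_mono) auto
  then have "1 / (2 * s) \<le> sqrt 2 - 1" using r2 by simp
  then have "1 / (2 * s) * (1 / s) \<le> (sqrt 2 - 1) * (1 / s)" using s by (intro mult_right_mono) auto
  then have "1 / (2 * (s * s)) \<le> sqrt 2 / s - 1 / s" by (simp add: algebra_simps)
  then have "1 / (s * s) + 1 / s \<le> 1 / (2 * (s * s)) + sqrt 2 / s" by (simp add: field_simps)
  then show ?thesis unfolding s2[symmetric] by (simp add: s_def)
qed




lemma gamma_ge: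
  assumes mu: "\<mu> > 0" and x: "x \<in> {0..1}"
  shows "\<bar>aseq \<mu> (n+1) x - x\<bar> \<le> gamma \<mu> n"
proof -
  have "bdd_above ((\<lambda>x. \<bar>aseq \<mu> (n+1) x - x\<bar>) ` {0..1})"
  proof (rule bdd_aboveI)
    fix y assume "y \<in> (\<lambda>x. \<bar>aseq \<mu> (n+1) x - x\<bar>) ` {0..1}"
    then obtain z where z: "z \<in> {0..1}" "y = \<bar>aseq \<mu> (n+1) z - z\<bar>" by auto
    then show "y \<le> 1" using aseq_range[OF mu, of "n+1" z] by auto
  qed
  then show ?thesis unfolding gamma_def using x by (intro cSUP_upper) auto
qed

lemma Tn_nonneg: "\<mu> > 0 \<Longrightarrow> Tn \<mu> n \<ge> 0"
  using gamma_ge[of \<mu> 0 n] by (simp add: Tn_def)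

lemma LKg_bound:
  assumes mu: "\<mu> > 0" and g: "g \<in> C1" and n: "n \<ge> 1" and x: "x \<in> {0..1}"
  shows "\<bar>LK \<mu> n g x - g x\<bar> \<le> ln (2+\<mu>) / ln (1+\<mu>) * (1 + 1 / ((1+\<mu>) * ln (1+\<mu>))) * Tn \<mu> n * C1_norm g"
proof -
  obtain g' where g': "continuous_on {0..1} g'" "\<And>x. x \<in> {0..1} \<Longrightarrow> (g has_real_derivative g' x) (at x within {0..1})"
    and cg: "continuous_on {0..1} g"
    and b0: "\<And>x. x \<in> {0..1} \<Longrightarrow> \<bar>g x\<bar> \<le> (SUP x\<in>{0..1}. \<bar>g x\<bar>)"
    and b1: "\<And>x. x \<in> {0..1} \<Longrightarrow> \<bar>g' x\<bar> \<le> (SUP x\<in>{0..1}. \<bar>vector_derivative g (at x within {0..1})\<bar>)"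
    and nrm: "C1_norm g = (SUP x\<in>{0..1}. \<bar>g x\<bar>) + (SUP x\<in>{0..1}. \<bar>vector_derivative g (at x within {0..1})\<bar>)"
    using C1_facts[OF g] by blast
  define G0 where "G0 = (SUP x\<in>{0..1}. \<bar>g x\<bar>)"
  define G1 where "G1 = (SUP x\<in>{0..1}. \<bar>vector_derivative g (at x within {0..1})\<bar>)"
  define L where "L = ln (1+\<mu>)"
  define Lg where "Lg = (G1 + G0 / ((1+\<mu>) * L)) / L"
  define D where "D = 1 + 1 / ((1+\<mu>) * L)"
  define gm where "gm = fmu \<mu> g"
  define m where "m = real (n+1)"
  define I where "I k = {real k / m .. real (k+1) / m}" for k
  define a where "a = aseq \<mu> (n+1) x"
  have L: "L > 0" using mu by (simp add: L_def)
  have G: "G0 \<ge> 0" "G1 \<ge> 0" using b0[of 0] b1[of 0] by (auto simp: G0_def G1_def)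
  have m: "m > 0" "m \<ge> 1" by (simp_all add: m_def)
  have Lg: "Lg \<ge> 0" using G L mu by (simp add: Lg_def)
  have lip: "\<bar>gm t - gm y\<bar> \<le> Lg * \<bar>t - y\<bar>" if "t \<in> {0..1}" "y \<in> {0..1}" for t y
    using fmu_lipschitz[OF mu g'(2) b0 b1 that(2) that(1)] by (simp add: gm_def Lg_def G0_def G1_def L_def)
  have cgm: "continuous_on {0..1} gm"
    unfolding gm_def fmu_def[abs_def] using lnmu_pos[OF mu]
    by (intro continuous_intros cg lnmu_cont[OF mu]) (auto simp: less_le)
  have ax: "0 \<le> a" "a \<le> 1" using aseq_range[OF mu, of "n+1" x] x by (auto simp: a_def)
  have lx: "lnmu \<mu> x > 0" "lnmu \<mu> x \<le> ln (2+\<mu>)" using x mu lnmu_pos lnmu_le by auto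
  have sub: "I k \<subseteq> {0..1}" if "k \<le> n" for k
    using that m by (auto simp: I_def m_def field_simps)
  have trm: "\<bar>m * integral\<^sup>L (lebesgue_on (I k)) gm - gm x\<bar> \<le> Lg * (\<bar>real k / m - x\<bar> + 1 / m)" if k: "k \<le> n" for k
  proof -
    have cI: "continuous_on (I k) gm" using continuous_on_subset[OF cgm sub[OF k]] .
    have li: "integral\<^sup>L (lebesgue_on (I k)) gm = integral (I k) gm"
    proof (rule lint_hk)
      show "integrable (lebesgue_on (I k)) gm" unfolding I_def by (rule cont_int_lebesgue) (use cI in \<open>simp add: I_def\<close>)
    qed (simp add: I_def)
    have ab: "real k / m \<le> real (k+1) / m" using m by (simp add: divide_right_mono)
    have cont: "Henstock_Kurzweil_Integration.content (I k) = 1 / m" using ab m by (simp add: I_def field_simps)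
    have gi: "gm integrable_on I k" using cI by (simp add: I_def integrable_continuous_interval)
    have eq: "integral (I k) (\<lambda>t. gm t - gm x) = integral (I k) gm - gm x / m"
    proof -
      have "integral (I k) (\<lambda>t. gm t - gm x) = integral (I k) gm - integral (I k) (\<lambda>t. gm x)"
        by (rule integral_diff[OF gi]) (simp add: I_def integrable_const_ivl)
      also have "integral (I k) (\<lambda>t. gm x) = gm x / m"
        using cont unfolding I_def by (simp only: integral_const_real) simp
      finally show ?thesis .
    qed
    have "\<bar>integral (I k) (\<lambda>t. gm t - gm x)\<bar> \<le> integral (I k) (\<lambda>t. Lg * (\<bar>real k / m - x\<bar> + 1 / m))"
    proof (rule integral_norm_bound_integral[where f="\<lambda>t. gm t - gm x", simplified])
      show "(\<lambda>t. gm t - gm x) integrable_on I k" using gi by (intro integrable_diff) (auto simp: I_def)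
      show "(\<lambda>t. Lg * (\<bar>real k / m - x\<bar> + 1 / m)) integrable_on I k" by (simp add: I_def integrable_const_ivl)
      fix t assume t: "t \<in> I k"
      have "\<bar>gm t - gm x\<bar> \<le> Lg * \<bar>t - x\<bar>" using lip t sub[OF k] x by auto
      also have "\<dots> \<le> Lg * (\<bar>real k / m - x\<bar> + 1 / m)"
      proof (rule mult_left_mono[OF _ Lg])
        have "real k / m \<le> t" "t \<le> real (k+1) / m" using t by (auto simp: I_def)
        moreover have "real (k+1) / m = real k / m + 1 / m" using m by (simp add: add_divide_distrib)
        ultimately show "\<bar>t - x\<bar> \<le> \<bar>real k / m - x\<bar> + 1 / m" by linarith
      qed
      finally show "\<bar>gm t - gm x\<bar> \<le> Lg * (\<bar>real k / m - x\<bar> + 1 / m)" .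
    qed
    also have "\<dots> = Lg * (\<bar>real k / m - x\<bar> + 1 / m) / m" using cont by (simp add: I_def)
    finally have "\<bar>integral (I k) gm - gm x / m\<bar> \<le> Lg * (\<bar>real k / m - x\<bar> + 1 / m) / m" using eq by simp
    then have "m * \<bar>integral (I k) gm - gm x / m\<bar> \<le> Lg * (\<bar>real k / m - x\<bar> + 1 / m)"
      using m by (simp add: field_simps)
    moreover have "m * \<bar>integral (I k) gm - gm x / m\<bar> = \<bar>m * integral (I k) gm - gm x\<bar>"
    proof -
      have "m * (integral (I k) gm - gm x / m) = m * integral (I k) gm - gm x" using m by (simp add: right_diff_distrib)
      moreover have "m * \<bar>integral (I k) gm - gm x / m\<bar> = \<bar>m * (integral (I k) gm - gm x / m)\<bar>"
        using m by (simp add: abs_mult)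
      ultimately show ?thesis by simp
    qed
    ultimately show ?thesis using li by simp
  qed
  have sumB: "(\<Sum>k=0..n. Bernstein n k a) = 1" by (simp add: atLeast0AtMost)
  have e: "LK \<mu> n g x - g x = lnmu \<mu> x * (\<Sum>k=0..n. Bernstein n k a * (m * integral\<^sup>L (lebesgue_on (I k)) gm - gm x))"
  proof -
    have gx: "g x = lnmu \<mu> x * (\<Sum>k=0..n. Bernstein n k a * gm x)"
    proof -
      have "(\<Sum>k=0..n. Bernstein n k a * gm x) = gm x" by (simp add: sum_distrib_right[symmetric] sumB)
      then show ?thesis using lx by (simp add: gm_def fmu_def)
    qed
    have "LK \<mu> n g x = lnmu \<mu> x * (\<Sum>k=0..n. Bernstein n k a * (m * integral\<^sup>L (lebesgue_on (I k)) gm))"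
      unfolding LK_def by (simp only: bern_eq a_def m_def I_def gm_def)
    then show ?thesis unfolding gx by (simp add: right_diff_distrib sum_subtractf)
  qed
  have "\<bar>LK \<mu> n g x - g x\<bar> \<le> lnmu \<mu> x * (\<Sum>k=0..n. Bernstein n k a * (Lg * (\<bar>real k / m - x\<bar> + 1 / m)))"
  proof -
    have "\<bar>LK \<mu> n g x - g x\<bar> = lnmu \<mu> x * \<bar>\<Sum>k=0..n. Bernstein n k a * (m * integral\<^sup>L (lebesgue_on (I k)) gm - gm x)\<bar>"
      unfolding e using lx by (simp add: abs_mult)
    also have "\<dots> \<le> lnmu \<mu> x * (\<Sum>k=0..n. Bernstein n k a * (Lg * (\<bar>real k / m - x\<bar> + 1 / m)))"
    proof (rule mult_left_mono)
      show "\<bar>\<Sum>k=0..n. Bernstein n k a * (m * integral\<^sup>L (lebesgue_on (I k)) gm - gm x)\<bar>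
            \<le> (\<Sum>k=0..n. Bernstein n k a * (Lg * (\<bar>real k / m - x\<bar> + 1 / m)))"
        using ax trm by (intro order.trans[OF sum_abs] sum_mono)
          (auto simp: abs_mult Bernstein_nonneg intro!: mult_left_mono)
    qed (use lx in auto)
    finally show ?thesis .
  qed
  also have "\<dots> \<le> ln (2+\<mu>) * (Lg * ((\<Sum>k=0..n. Bernstein n k a * \<bar>real k / m - x\<bar>) + 1 / m))"
  proof (rule mult_mono)
    show "(\<Sum>k=0..n. Bernstein n k a * (Lg * (\<bar>real k / m - x\<bar> + 1 / m)))
          \<le> Lg * ((\<Sum>k=0..n. Bernstein n k a * \<bar>real k / m - x\<bar>) + 1 / m)"
    proof -
      have "(\<Sum>k=0..n. Bernstein n k a * (Lg * (\<bar>real k / m - x\<bar> + 1 / m)))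
          = (\<Sum>k=0..n. Lg * (Bernstein n k a * \<bar>real k / m - x\<bar>) + (Lg / m) * Bernstein n k a)"
        by (intro sum.cong) (auto simp: algebra_simps)
      also have "\<dots> = Lg * (\<Sum>k=0..n. Bernstein n k a * \<bar>real k / m - x\<bar>) + (Lg / m) * (\<Sum>k=0..n. Bernstein n k a)"
        by (simp only: sum.distrib sum_distrib_left)
      finally show ?thesis by (simp add: sumB distrib_left)
    qed
  qed (use lx ax Lg m in \<open>auto intro!: sum_nonneg mult_nonneg_nonneg Bernstein_nonneg\<close>)
  also have "(\<Sum>k=0..n. Bernstein n k a * \<bar>real k / m - x\<bar>) \<le> 1 / sqrt m + gamma \<mu> n"
  proof -
    have "(\<Sum>k=0..n. Bernstein n k a * \<bar>real k / m - x\<bar>) \<le> (\<Sum>k=0..n. Bernstein n k a * (\<bar>real k / m - a\<bar> + \<bar>a - x\<bar>))"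
      using ax by (intro sum_mono mult_left_mono) (auto intro: Bernstein_nonneg)
    also have "\<dots> = (\<Sum>k=0..n. Bernstein n k a * \<bar>real k / m - a\<bar>) + \<bar>a - x\<bar>"
      by (simp add: distrib_left sum.distrib sum_distrib_right[symmetric] sumB)
    also have "\<dots> \<le> 1 / sqrt m + gamma \<mu> n"
      using bern_absdev[OF ax, of n] gamma_ge[OF mu x, of n] by (simp add: m_def a_def)
    finally show ?thesis .
  qed
  then have "ln (2+\<mu>) * (Lg * ((\<Sum>k=0..n. Bernstein n k a * \<bar>real k / m - x\<bar>) + 1 / m))
      \<le> ln (2+\<mu>) * (Lg * (1 / sqrt m + gamma \<mu> n + 1 / m))"
    using Lg mu by (intro mult_left_mono) auto
  also have "\<dots> \<le> ln (2+\<mu>) * (Lg * Tn \<mu> n)"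
  proof -
    have "1 / sqrt m + gamma \<mu> n + 1 / m \<le> Tn \<mu> n"
      using numeric_T[OF n] by (simp add: Tn_def m_def)
    then show ?thesis using Lg mu by (intro mult_left_mono) auto
  qed
  also have "\<dots> \<le> ln (2+\<mu>) * (D * (G0 + G1) / L * Tn \<mu> n)"
  proof -
    have "G1 + G0 / ((1+\<mu>) * L) \<le> D * (G0 + G1)"
    proof -
      have "G0 / ((1+\<mu>) * L) \<le> G0 + G0 / ((1+\<mu>) * L) + G1 / ((1+\<mu>) * L)"
        using G L mu by (simp add: add_nonneg_nonneg)
      then show ?thesis by (simp add: D_def algebra_simps add_divide_distrib)
    qed
    then have "Lg \<le> D * (G0 + G1) / L" unfolding Lg_def using L by (intro divide_right_mono) auto
    then show ?thesis using Tn_nonneg[OF mu, of n] mu by (intro mult_left_mono mult_right_mono) auto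
  qed
  also have "\<dots> = ln (2+\<mu>) / ln (1+\<mu>) * (1 + 1 / ((1+\<mu>) * ln (1+\<mu>))) * Tn \<mu> n * C1_norm g"
    by (simp add: nrm G0_def G1_def D_def L_def)
  finally show ?thesis .
qed




lemma in_Lp_uminus:
  assumes "in_Lp p u"
  shows "in_Lp p (\<lambda>x. - u x)" "Lp_norm p (\<lambda>x. - u x) = Lp_norm p u"
  using assms by (auto simp: in_Lp_def Lp_norm_def)

lemma Lp_norm_bounded:
  assumes p: "p \<ge> 1" and B: "B \<ge> 0" and u: "in_Lp p u" and b: "\<And>x. x \<in> {0..1} \<Longrightarrow> \<bar>u x\<bar> \<le> B"
  shows "Lp_norm p u \<le> B"
proof (rule Lp_norm_le_of_int_le)
  have ci: "integrable (lebesgue_on {0..1::real}) (\<lambda>x. B powr p)" by (rule cont_int_lebesgue) auto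
  have "integral\<^sup>L (lebesgue_on {0..1}) (\<lambda>x. \<bar>u x\<bar> powr p) \<le> integral\<^sup>L (lebesgue_on {0..1::real}) (\<lambda>x. B powr p)"
    using u ci b p by (intro integral_mono) (auto simp: in_Lp_def intro: powr_mono2)
  also have "\<dots> = B powr p" using ci by (subst lint_hk) auto
  finally show "integral\<^sup>L (lebesgue_on {0..1}) (\<lambda>x. \<bar>u x\<bar> powr p) \<le> B powr p" .
qed (use p B in auto)

lemma C1_nonempty: "(\<lambda>x. 0) \<in> C1"
proof -
  have "continuous_on {0..1} (\<lambda>x::real. 0::real)" by (rule continuous_on_const)
  moreover have "\<forall>x\<in>{0..1}. ((\<lambda>x::real. 0::real) has_real_derivative (\<lambda>x. 0) x) (at x within {0..1})"
    by (simp add: DERIV_const)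
  ultimately show ?thesis unfolding C1_def by blast
qed

lemma C1_norm_nonneg:
  assumes g: "g \<in> C1"
  shows "C1_norm g \<ge> 0"
proof -
  obtain g' where "continuous_on {0..1} g'" "\<And>x. x \<in> {0..1} \<Longrightarrow> (g has_real_derivative g' x) (at x within {0..1})"
    "continuous_on {0..1} g"
    and b0: "\<And>x. x \<in> {0..1} \<Longrightarrow> \<bar>g x\<bar> \<le> (SUP x\<in>{0..1}. \<bar>g x\<bar>)"
    and b1: "\<And>x. x \<in> {0..1} \<Longrightarrow> \<bar>g' x\<bar> \<le> (SUP x\<in>{0..1}. \<bar>vector_derivative g (at x within {0..1})\<bar>)"
    and nrm: "C1_norm g = (SUP x\<in>{0..1}. \<bar>g x\<bar>) + (SUP x\<in>{0..1}. \<bar>vector_derivative g (at x within {0..1})\<bar>)"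
    using C1_facts[OF g] by blast
  have "\<bar>g 0\<bar> \<le> (SUP x\<in>{0..1}. \<bar>g x\<bar>)" by (rule b0) simp
  moreover have "\<bar>g' 0\<bar> \<le> (SUP x\<in>{0..1}. \<bar>vector_derivative g (at x within {0..1})\<bar>)" by (rule b1) simp
  moreover have "\<bar>g 0\<bar> \<ge> 0" "\<bar>g' 0\<bar> \<ge> 0" by simp_all
  ultimately show ?thesis unfolding nrm by linarith
qed

lemma main_bound:
  assumes mu: "\<mu> > 0" and p: "1 \<le> p" and f: "in_Lp p f" and n: "n \<ge> 1" and g: "g \<in> C1"
  shows "Lp_norm p (\<lambda>x. LK \<mu> n f x - f x)
     \<le> ln (2 + \<mu>) / ln (1 + \<mu>) * (Kmu \<mu> + 1) * (Lp_norm p (\<lambda>x. f x - g x) + Lambda \<mu> n * C1_norm g)"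
proof -
  define C where "C = ln (2 + \<mu>) / ln (1 + \<mu>)"
  define K where "K = Kmu \<mu>"
  define D where "D = 1 + 1 / ((1+\<mu>) * ln (1+\<mu>))"
  define T where "T = Tn \<mu> n"
  define h where "h = (\<lambda>x. f x - g x)"
  have C: "C \<ge> 1" using mu by (simp add: C_def)
  have K: "K \<ge> 1" using mu by (simp add: K_def Kmu_def)
  have D: "D \<ge> 0" using mu by (simp add: D_def add_nonneg_nonneg)
  have T: "T \<ge> 0" using Tn_nonneg[OF mu] by (simp add: T_def)
  have gn: "C1_norm g \<ge> 0" using C1_norm_nonneg[OF g] .
  have cg: "continuous_on {0..1} g" using g unfolding C1_def by (auto intro: DERIV_continuous_on)
  have gL: "in_Lp p g" using cont_in_Lp[OF cg] p by auto
  have hL: "in_Lp p h" unfolding h_def using Lp_sum_bound[OF p f in_Lp_uminus(1)[OF gL]] by simp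
  have int_fmu: "integrable (lebesgue_on {real k / real (n+1) .. real (k+1) / real (n+1)}) (fmu \<mu> u)"
    if "in_Lp p u" "k \<le> n" for u k
  proof (rule integrable_subinterval)
    show "integrable (lebesgue_on {0..1}) (fmu \<mu> u)" using in_Lp_integrable[OF p fmu_in_Lp(1)[OF mu p that(1)]] .
    show "{real k / real (n+1) .. real (k+1) / real (n+1)} \<subseteq> {0..1}" using that(2) by (auto simp: field_simps)
  qed
  have fe: "f = (\<lambda>x. h x + g x)" by (simp add: h_def)
  have LKf: "LK \<mu> n f x = LK \<mu> n h x + LK \<mu> n g x" for x
    unfolding fe by (rule LK_add) (use int_fmu hL gL in auto)
  define u1 where "u1 = LK \<mu> n h"
  define u2 where "u2 = (\<lambda>x. LK \<mu> n g x - g x)"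
  define u3 where "u3 = (\<lambda>x. - h x)"
  have u1: "in_Lp p u1" "Lp_norm p u1 \<le> C * K * Lp_norm p h"
    using LK_Lp[OF mu p hL, of n] by (simp_all add: u1_def C_def K_def)
  have u2c: "continuous_on {0..1} u2" unfolding u2_def by (intro continuous_intros LK_cont[OF mu] cg)
  have u2: "in_Lp p u2" using cont_in_Lp[OF u2c] p by auto
  have B0: "C * D * T * C1_norm g \<ge> 0" using C D T gn by simp
  have u2b: "Lp_norm p u2 \<le> C * D * T * C1_norm g"
  proof (rule Lp_norm_bounded[OF p B0 u2])
    fix x :: real assume "x \<in> {0..1}"
    from LKg_bound[OF mu g n this] show "\<bar>u2 x\<bar> \<le> C * D * T * C1_norm g"
      by (simp only: u2_def C_def D_def T_def)
  qed
  have u3: "in_Lp p u3" "Lp_norm p u3 = Lp_norm p h" using in_Lp_uminus[OF hL] by (simp_all add: u3_def)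
  have eq: "(\<lambda>x. LK \<mu> n f x - f x) = (\<lambda>x. (u1 x + u2 x) + u3 x)"
    by (rule ext) (simp add: LKf u1_def u2_def u3_def h_def)
  have "Lp_norm p (\<lambda>x. LK \<mu> n f x - f x) \<le> Lp_norm p (\<lambda>x. u1 x + u2 x) + Lp_norm p u3"
    unfolding eq by (rule Minkowski[OF p Lp_sum_bound[OF p u1(1) u2] u3(1)])
  also have "\<dots> \<le> (Lp_norm p u1 + Lp_norm p u2) + Lp_norm p u3"
    using Minkowski[OF p u1(1) u2] by simp
  also have "\<dots> \<le> C * K * Lp_norm p h + C * D * T * C1_norm g + Lp_norm p h"
    using u1(2) u2b u3(2) by simp
  also have "\<dots> \<le> C * (K + 1) * (Lp_norm p h + Lambda \<mu> n * C1_norm g)"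
  proof -
    have L0: "Lambda \<mu> n = C * D * inverse (K + 1) * T"
      unfolding Lambda_def C_def D_def T_def K_def ..
    have Lam: "C * (K + 1) * Lambda \<mu> n = C * C * D * T"
      unfolding L0 using K by (simp add: field_simps)
    have "C * D * T * C1_norm g \<le> C * (C * D * T * C1_norm g)"
      using mult_right_mono[OF C B0] by simp
    moreover have "C * K * Lp_norm p h + Lp_norm p h \<le> C * (K + 1) * Lp_norm p h"
    proof -
      have "1 * Lp_norm p h \<le> C * Lp_norm p h" using mult_right_mono[OF C Lp_norm_nonneg[of p h]] .
      then show ?thesis by (simp add: algebra_simps)
    qed
    moreover have "C * (K + 1) * (Lp_norm p h + Lambda \<mu> n * C1_norm g)
        = C * (K + 1) * Lp_norm p h + (C * (K + 1) * Lambda \<mu> n) * C1_norm g"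
      by (simp only: distrib_left mult.assoc)
    ultimately show ?thesis unfolding Lam by linarith
  qed
  finally show ?thesis unfolding C_def K_def h_def .
qed

theorem theorem6p2:
  fixes \<mu> p :: real and f :: "real \<Rightarrow> real"
  assumes "\<mu> > 0" and "1 \<le> p" and "in_Lp p f"
  shows "\<forall>\<^sub>F n in sequentially.
           Lp_norm p (\<lambda>x. LK \<mu> n f x - f x)
             \<le> ln (2 + \<mu>) / ln (1 + \<mu>) * (Kmu \<mu> + 1) * Kfun p f (Lambda \<mu> n)"
proof (rule eventually_sequentiallyI[of 1])
  fix n :: nat assume n: "n \<ge> 1"
  define R where "R = ln (2 + \<mu>) / ln (1 + \<mu>) * (Kmu \<mu> + 1)"
  have R: "R > 0" using assms(1) by (simp add: R_def Kmu_def add_pos_pos)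
  have "Lp_norm p (\<lambda>x. LK \<mu> n f x - f x) / R \<le> Kfun p f (Lambda \<mu> n)"
    unfolding Kfun_def
  proof (rule cINF_greatest)
    show "C1 \<noteq> {}" using C1_nonempty by auto
    fix g assume g: "g \<in> C1"
    show "Lp_norm p (\<lambda>x. LK \<mu> n f x - f x) / R \<le> Lp_norm p (\<lambda>x. f x - g x) + Lambda \<mu> n * C1_norm g"
    proof -
      have "Lp_norm p (\<lambda>x. LK \<mu> n f x - f x) \<le> R * (Lp_norm p (\<lambda>x. f x - g x) + Lambda \<mu> n * C1_norm g)"
        using main_bound[OF assms n g] by (simp only: R_def)
      then show ?thesis by (simp only: pos_divide_le_eq[OF R] mult.commute)
    qed
  qed
  then show "Lp_norm p (\<lambda>x. LK \<mu> n f x - f x) \<le> ln (2 + \<mu>) / ln (1 + \<mu>) * (Kmu \<mu> + 1) * Kfun p f (Lambda \<mu> n)"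
  proof -
    from \<open>_ / R \<le> _\<close> have "Lp_norm p (\<lambda>x. LK \<mu> n f x - f x) \<le> R * Kfun p f (Lambda \<mu> n)"
      by (simp only: pos_divide_le_eq[OF R] mult.commute)
    then show ?thesis by (simp only: R_def)
  qed
qed


end
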